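(* Assume $E$ is countable. Let $\gamma$ be a POS and $\Delta\in\mathcal T_b$. Then there is an enumeration $x_1,\dots,x_n$ of the points of $\Delta$ such that $\gamma_\Delta=\gamma_{x_1}\gamma_{x_2}\cdots\gamma_{x_n}$ (as kernels on $\mathcal F_{S\setminus\Delta_+}$).
   Context: $(S,\le)$ is a countable partially ordered set. For $x\in S$ write $x_-=\{y\in S:y<x\}$, $x_+=\{y\in S:y>x\}$. For $\Upsilon\subset S$: $\max(\Upsilon)=\{x\in\Upsilon: y\notin\Upsilon\text{ for all }y>x\}$, $\min(\Upsilon)=\{x\in\Upsilon: y\notin\Upsilon\text{ for all }y<x\}$, the past $\Upsilon_-=\{x\in S\setminus\Upsilon:\exists y\in\Upsilon,\ x<y\}$, the future $\Upsilon_+=\{x\in S\setminus\Upsilon:\exists y\in\Upsilon,\ x>y\}$, and the outer time $\Upsilon^*=\{x\in S: x\text{ is comparable with no }y\in\Upsilon\}$. Standing assumptions: for every $x\in S$, $\max(x_-)$ and $\min(x_+)$ are finite, every $y<x$ satisfies $y\le y_0<x$ for some $y_0\in\max(x_-)$, every $z>x$ satisfies $z\ge z_0>x$ for some $z_0\in\min(x_+)$; and $S$ has no minimal element. A finite set $\Lambda\subset S$ is a time box if $\Lambda_-\cap\Lambda_+=\emptyset$; $\mathcal T_b$ denotes the set of time boxes (every singleton is one). $(E,\mathcal E)$ is a measurable space (colors), $\Omega=E^S$ with the product $\sigma$-algebra $\mathcal F$; for $\Upsilon\subset S$, $\mathcal F_\Upsilon$ is the $\sigma$-algebra generated by the coordinates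 in $\Upsilon$. A proper oriented kernel on $\Lambda\in\mathcal T_b$ is a map $\gamma_\Lambda:\mathcal F_{S\setminus\Lambda_+}\times\Omega\to[0,1]$ such that (a) $\gamma_\Lambda(\cdot,\omega)$ is a probability measure for each $\omega$; (b) $\gamma_\Lambda(A,\cdot)$ is $\mathcal F_{\Lambda_-\cup\Lambda^*}$-measurable for each $A\in\mathcal F_{S\setminus\Lambda_+}$; (c) $\gamma_\Lambda(A,\cdot)$ is $\mathcal F_{\Lambda_-}$-measurable for each $A\in\mathcal F_\Lambda$; (d) $\gamma_\Lambda(B,\omega)=\mathbf 1_B(\omega)$ for all $B\in\mathcal F_{\Lambda_-\cup\Lambda^*}$. Write $\gamma_\Lambda(f\mid\omega)=\int f(\xi)\,\gamma_\Lambda(d\xi,\omega)$, $\gamma_\Lambda f=\gamma_\Lambda(f\mid\cdot)$, and define composition by $(\gamma_\Delta\gamma_\Lambda)(f\mid\omega)=\int\gamma_\Lambda(f\mid\sigma)\,\gamma_\Delta(d\sigma,\omega)$ (so $\gamma_{x_1}\cdots\gamma_{x_n}f=\gamma_{x_1}(\gamma_{x_2}(\cdots\gamma_{x_n}f))$). A partially oriented specification (POS) is a family $\gamma=(\gamma_\Lambda)_{\Lambda\in\mathcal T_b}$ of proper oriented kernels with $\gamma_\Delta\gamma_\Lambda=\gamma_\Delta$ on $\mathcal F_{S\setminus\Lambda_+}$ (i.e. for all bounded $\mathcal F_{S\setminus\Lambda_+}$-measurable $h$ and all $\omega$) whenever $\Lambda\subset\Delta$ are time boxes. We write $\gamma_x=\gamma_{\{x\}}$.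 *)

theory Defs
  imports "HOL-Probability.Probability"
begin

definition maxset :: "'s::order set \<Rightarrow> 's set" where
  "maxset U = {x \<in> U. \<forall>y. x < y \<longrightarrow> y \<notin> U}"

definition minset :: "'s::order set \<Rightarrow> 's set" where
  "minset U = {x \<in> U. \<forall>y. y < x \<longrightarrow> y \<notin> U}"

definition past :: "'s::order set \<Rightarrow> 's set" where
  "past U = {x. x \<notin> U \<and> (\<exists>y\<in>U. x < y)}"

definition fut :: "'s::order set \<Rightarrow> 's set" where
  "fut U = {x. x \<notin> U \<and> (\<exists>y\<in>U. y < x)}"

definition outer :: "'s::order set \<Rightarrow> 's set" where
  "outer U = {x. \<forall>y\<in>U. \<not> x \<le> y \<and> \<not> y \<le> x}"

definition standing_assms :: "'s::order itself \<Rightarrow> bool" where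
  "standing_assms _ \<longleftrightarrow>
     (\<forall>x::'s. finite (maxset {y. y < x}) \<and> finite (minset {z. x < z})
        \<and> (\<forall>y. y < x \<longrightarrow> (\<exists>y0\<in>maxset {y. y < x}. y \<le> y0))
        \<and> (\<forall>z. x < z \<longrightarrow> (\<exists>z0\<in>minset {z. x < z}. z0 \<le> z)))
   \<and> (\<forall>x::'s. \<exists>y. y < x)"

definition time_box :: "'s::order set \<Rightarrow> bool" where
  "time_box L \<longleftrightarrow> finite L \<and> past L \<inter> fut L = {}"

text \<open>The sigma-algebra F_U on Omega = E^S generated by the coordinates in U
  (colour space E carries the discrete sigma-algebra).\<close>
definition Fsig :: "'s set \<Rightarrow> ('s \<Rightarrow> 'e) measure" where
  "Fsig U = sigma UNIV {{\<omega>. \<omega> x \<in> A} | x A. x \<in> U}"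

text \<open>A kernel is represented as a map omega \<mapsto> measure on (Omega, F_{S - L_+}).\<close>
definition proper_oriented_kernel ::
  "'s::order set \<Rightarrow> (('s \<Rightarrow> 'e) \<Rightarrow> ('s \<Rightarrow> 'e) measure) \<Rightarrow> bool" where
  "proper_oriented_kernel L g \<longleftrightarrow>
     (\<forall>\<omega>. prob_space (g \<omega>) \<and> sets (g \<omega>) = sets (Fsig (- fut L)))
   \<and> (\<forall>A \<in> sets (Fsig (- fut L)).
        (\<lambda>\<omega>. measure (g \<omega>) A) \<in> borel_measurable (Fsig (past L \<union> outer L)))
   \<and> (\<forall>A \<in> sets (Fsig L). (\<lambda>\<omega>. measure (g \<omega>) A) \<in> borel_measurable (Fsig (past L)))
   \<and> (\<forall>B \<in> sets (Fsig (past L \<union> outer L)). \<forall>\<omega>. measure (g \<omega>) B = indicator B \<omega>)"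

definition POS :: "('s::order set \<Rightarrow> ('s \<Rightarrow> 'e) \<Rightarrow> ('s \<Rightarrow> 'e) measure) \<Rightarrow> bool" where
  "POS \<gamma> \<longleftrightarrow>
     (\<forall>L. time_box L \<longrightarrow> proper_oriented_kernel L (\<gamma> L))
   \<and> (\<forall>L D. time_box L \<and> time_box D \<and> L \<subseteq> D \<longrightarrow>
        (\<forall>h :: ('s \<Rightarrow> 'e) \<Rightarrow> real.
           h \<in> borel_measurable (Fsig (- fut L)) \<and> h \<in> borel_measurable (Fsig (- fut D))
           \<and> (\<exists>B. \<forall>\<omega>. \<bar>h \<omega>\<bar> \<le> B) \<longrightarrow>
           (\<forall>\<omega>. (\<integral>\<sigma>. (\<integral>\<xi>. h \<xi> \<partial>(\<gamma> L \<sigma>)) \<partial>(\<gamma> D \<omega>)) = (\<integral>\<xi>. h \<xi> \<partial>(\<gamma> D \<omega>)))))"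

definition kcomp :: "('s set \<Rightarrow> ('s \<Rightarrow> 'e) \<Rightarrow> ('s \<Rightarrow> 'e) measure) \<Rightarrow> 's list
    \<Rightarrow> (('s \<Rightarrow> 'e) \<Rightarrow> real) \<Rightarrow> ('s \<Rightarrow> 'e) \<Rightarrow> real" where
  "kcomp \<gamma> xs f = foldr (\<lambda>x g. \<lambda>\<omega>. \<integral>\<sigma>. g \<sigma> \<partial>(\<gamma> {x} \<omega>)) xs f"

end

theory Submission
  imports Defs
begin

definition gen :: "'s set \<Rightarrow> ('s \<Rightarrow> 'e) set set" where
  "gen U = {{\<omega>. \<omega> x \<in> A} | x A. x \<in> U}"

lemma Fsig_alt: "Fsig U = sigma UNIV (gen U)" by (simp add: Fsig_def gen_def)

lemma gen_Pow: "gen U \<subseteq> Pow UNIV" by auto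

lemma space_Fsig[simp]: "space (Fsig U) = UNIV"
  unfolding Fsig_alt by (simp add: space_measure_of_conv)

lemma sets_Fsig: "sets (Fsig U) = sigma_sets UNIV (gen U)"
  unfolding Fsig_alt by (simp add: sets_measure_of_conv)

lemma Fsig_coord: "x \<in> U \<Longrightarrow> {\<omega>. \<omega> x \<in> A} \<in> sets (Fsig U)"
  unfolding sets_Fsig gen_def by (rule sigma_sets.Basic) blast

lemma Fsig_coord_eq: "x \<in> U \<Longrightarrow> {\<omega>. \<omega> x = c} \<in> sets (Fsig U)"
  using Fsig_coord[of x U "{c}"] by simp

lemma Fsig_mono: "U \<subseteq> U' \<Longrightarrow> sets (Fsig U) \<subseteq> sets (Fsig U')"
  unfolding sets_Fsig gen_def by (rule sigma_sets_mono') auto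

lemma Fsig_meas_mono:
  "f \<in> borel_measurable (Fsig U) \<Longrightarrow> U \<subseteq> U' \<Longrightarrow> f \<in> borel_measurable (Fsig U')"
  using measurable_mono[of borel borel "Fsig U" "Fsig U'"] Fsig_mono by auto

lemma Fsig_sat:
  assumes "A \<in> sets (Fsig U)" "\<forall>y\<in>U. \<omega> y = \<omega>' y"
  shows "\<omega> \<in> A \<longleftrightarrow> \<omega>' \<in> A"
proof -
  have "A \<in> sigma_sets UNIV (gen U)" using assms(1) by (simp add: sets_Fsig)
  then show ?thesis
  proof induct
    case (Basic a) then show ?case using assms(2) by (auto simp: gen_def)
  qed auto
qed

lemma Fsig_fun:
  fixes g :: "_ \<Rightarrow> real"
  assumes "g \<in> borel_measurable (Fsig U)" "\<forall>y\<in>U. \<omega> y = \<omega>' y"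
  shows "g \<omega> = g \<omega>'"
proof -
  have "g -` {g \<omega>} \<inter> space (Fsig U) \<in> sets (Fsig U)"
    by (rule borel_measurable_vimage[OF assms(1)])
  from Fsig_sat[OF this assms(2)] show ?thesis by auto
qed

lemma Fsig_agree_set:
  fixes \<omega> :: "'s::countable \<Rightarrow> 'e"
  shows "{\<sigma>. \<forall>y\<in>U. \<sigma> y = \<omega> y} \<in> sets (Fsig U)"
proof -
  have "{\<sigma>. \<forall>y\<in>U. \<sigma> y = \<omega> y} = (\<Inter>y\<in>U. {\<sigma>. \<sigma> y \<in> {\<omega> y}})" by auto
  also have "\<dots> \<in> sets (Fsig U)"
  proof (cases "U = {}")
    case True then show ?thesis using sets.top[of "Fsig U"] by simp
  next
    case False
    show ?thesis
      using False by (intro sets.countable_INT') (auto intro!: Fsig_coord_eq)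
  qed
  finally show ?thesis .
qed

lemma compl_fut: "past L \<inter> fut L = {} \<Longrightarrow> - fut (L::'s::order set) = L \<union> past L \<union> outer L"
  unfolding fut_def past_def outer_def by (auto simp: order.order_iff_strict)

lemma po_sub: "past L \<inter> fut L = {} \<Longrightarrow> past (L::'s::order set) \<union> outer L \<subseteq> - fut L"
  using compl_fut by blast

lemma pok_prob: "proper_oriented_kernel L g \<Longrightarrow> prob_space (g \<omega>)"
  unfolding proper_oriented_kernel_def by auto
lemma pok_sets: "proper_oriented_kernel L g \<Longrightarrow> sets (g \<omega>) = sets (Fsig (- fut L))"
  unfolding proper_oriented_kernel_def by auto
lemma pok_space: "proper_oriented_kernel L g \<Longrightarrow> space (g \<omega>) = UNIV"
  using pok_sets[of L g \<omega>] sets_eq_imp_space_eq by fastforce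

lemma pok_kernel:
  fixes g :: "('s::order \<Rightarrow> 'e) \<Rightarrow> ('s \<Rightarrow> 'e) measure"
  assumes "proper_oriented_kernel L g"
  shows "g \<in> measurable (Fsig (past L \<union> outer L)) (subprob_algebra (Fsig (- fut L)))"
proof (rule measurable_subprob_algebra)
  fix a show "subprob_space (g a)" using pok_prob[OF assms] prob_space_imp_subprob_space by blast
  show "sets (g a) = sets (Fsig (- fut L))" using pok_sets[OF assms] .
next
  fix A :: "('s \<Rightarrow> 'e) set" assume A: "A \<in> sets (Fsig (- fut L))"
  have "(\<lambda>a. measure (g a) A) \<in> borel_measurable (Fsig (past L \<union> outer L))"
    using assms A unfolding proper_oriented_kernel_def by blast
  moreover have "emeasure (g a) A = ennreal (measure (g a) A)" for a
  proof -
    interpret prob_space "g a" using pok_prob[OF assms] .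
    show ?thesis by (rule emeasure_eq_measure)
  qed
  ultimately show "(\<lambda>a. emeasure (g a) A) \<in> borel_measurable (Fsig (past L \<union> outer L))"
    by simp
qed

lemma pok_int_meas:
  fixes f :: "_ \<Rightarrow> real"
  assumes "proper_oriented_kernel L g" "f \<in> borel_measurable (Fsig (- fut L))"
  shows "(\<lambda>\<omega>. \<integral>\<sigma>. f \<sigma> \<partial>(g \<omega>)) \<in> borel_measurable (Fsig (past L \<union> outer L))"
  using measurable_compose[OF pok_kernel[OF assms(1)] integral_measurable_subprob_algebra[OF assms(2)]] .

lemma pok_AE:
  fixes g :: "('s::{order,countable} \<Rightarrow> 'e) \<Rightarrow> _"
  assumes "proper_oriented_kernel L g"
  shows "AE \<sigma> in g \<omega>. \<forall>y\<in>past L \<union> outer L. \<sigma> y = \<omega> y"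
proof -
  interpret prob_space "g \<omega>" using pok_prob[OF assms] .
  let ?C = "{\<sigma>. \<forall>y\<in>past L \<union> outer L. \<sigma> y = \<omega> y}"
  have C: "?C \<in> sets (Fsig (past L \<union> outer L))" by (rule Fsig_agree_set)
  have "measure (g \<omega>) ?C = indicator ?C \<omega>" using assms C unfolding proper_oriented_kernel_def by blast
  then have "prob ?C = 1" by simp
  from AE_prob_1[OF this] show ?thesis by simp
qed

lemma pok_dirac:
  fixes h :: "_ \<Rightarrow> real" and g :: "('s::{order,countable} \<Rightarrow> 'e) \<Rightarrow> _"
  assumes "proper_oriented_kernel L g" "h \<in> borel_measurable (Fsig (past L \<union> outer L))"
    and tb: "past L \<inter> fut L = {}"
  shows "(\<integral>\<sigma>. h \<sigma> \<partial>(g \<omega>)) = h \<omega>"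
proof -
  interpret prob_space "g \<omega>" using pok_prob[OF assms(1)] .
  have hm: "h \<in> borel_measurable (g \<omega>)"
    using Fsig_meas_mono[OF assms(2) po_sub[OF tb]] measurable_cong_sets[OF pok_sets[OF assms(1), symmetric] refl]
    by blast
  have "(\<integral>\<sigma>. h \<sigma> \<partial>(g \<omega>)) = (\<integral>\<sigma>. h \<omega> \<partial>(g \<omega>))"
    apply (rule integral_cong_AE[OF hm])
     apply simp
    using pok_AE[OF assms(1), of \<omega>] apply eventually_elim
    using Fsig_fun[OF assms(2)] by blast
  also have "\<dots> = h \<omega>" using prob_space by simp
  finally show ?thesis .
qed

lemma coord_meas:
  fixes g :: "('s::order \<Rightarrow> 'e::countable) \<Rightarrow> ('s \<Rightarrow> 'e) measure"
  assumes pk: "proper_oriented_kernel {x} g"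
  shows "(\<lambda>\<sigma>. \<sigma> x) \<in> measurable (g \<omega>) (count_space UNIV)"
proof -
  have "{\<sigma>. \<sigma> x = a} \<in> sets (g \<omega>)" for a
    unfolding pok_sets[OF pk] by (rule Fsig_coord_eq) (simp add: fut_def)
  then show ?thesis
    unfolding measurable_count_space_eq2_countable pok_space[OF pk]
    by (auto simp: vimage_def)
qed

lemma singleton_tb: "past {x::'s::order} \<inter> fut {x} = {}"
  unfolding past_def fut_def by auto

lemma point_step:
  fixes g :: "('s::{order,countable} \<Rightarrow> 'e::countable) \<Rightarrow> ('s \<Rightarrow> 'e) measure" and f :: "_ \<Rightarrow> real"
  assumes pk: "proper_oriented_kernel {x} g"
    and f: "f \<in> borel_measurable (Fsig V)"
    and xV: "x \<in> V" and pV: "past {x} \<subseteq> V" and Vf: "V \<subseteq> - fut {x}"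
  shows "(\<lambda>\<omega>. \<integral>\<sigma>. f \<sigma> \<partial>(g \<omega>)) \<in> borel_measurable (Fsig (V - {x}))"
proof -
  define G where "G \<omega> = (\<integral>\<sigma>. f \<sigma> \<partial>(g \<omega>))" for \<omega>
  have fF: "f \<in> borel_measurable (Fsig (- fut {x}))" using Fsig_meas_mono[OF f Vf] .
  have fg: "f \<in> borel_measurable (g \<omega>)" for \<omega>
    using fF measurable_cong_sets[OF pok_sets[OF pk, symmetric] refl] by blast
  have G1: "G \<in> borel_measurable (Fsig (past {x} \<union> outer {x}))"
    unfolding G_def using pok_int_meas[OF pk fF] .
  then have G2: "G \<in> borel_measurable (Fsig UNIV)" using Fsig_meas_mono by blast
  define D where "D \<omega> = distr (g \<omega>) (count_space UNIV) (\<lambda>\<sigma>. \<sigma> x)" for \<omega>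
  have Vsub: "V - {x} \<subseteq> past {x} \<union> outer {x}" using Vf compl_fut[OF singleton_tb, of x] by blast
  have Ga: "G \<omega> = integral\<^sup>L (D \<omega>) (\<lambda>e. f ((fun_upd \<omega> x (e))))" for \<omega>
  proof -
    have "G \<omega> = integral\<^sup>L (g \<omega>) (\<lambda>\<sigma>. f ((fun_upd \<omega> x (\<sigma> x))))"
      unfolding G_def
    proof (rule integral_cong_AE[OF fg])
      show "(\<lambda>\<sigma>. f ((fun_upd \<omega> x (\<sigma> x)))) \<in> borel_measurable (g \<omega>)"
        by (rule measurable_compose[OF coord_meas[OF pk]]) simp
      show "AE \<sigma> in g \<omega>. f \<sigma> = f ((fun_upd \<omega> x (\<sigma> x)))"
        using pok_AE[OF pk, of \<omega>] apply eventually_elim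
        apply (rule Fsig_fun[OF f])
        using Vsub by auto
    qed
    also have "\<dots> = integral\<^sup>L (D \<omega>) (\<lambda>e. f ((fun_upd \<omega> x (e))))"
      unfolding D_def
      by (rule integral_distr[symmetric, OF coord_meas[OF pk]]) simp
    finally show ?thesis .
  qed
  have Dc: "D \<omega> = D \<omega>'" if ag: "\<forall>y\<in>past {x}. \<omega> y = \<omega>' y" for \<omega> \<omega>'
  proof (rule measure_eqI)
    show "sets (D \<omega>) = sets (D \<omega>')" by (simp add: D_def)
    fix A assume "A \<in> sets (D \<omega>)"
    have Ax: "{\<sigma>. \<sigma> x \<in> A} \<in> sets (Fsig {x})" by (rule Fsig_coord) simp
    have mf: "(\<lambda>\<omega>. measure (g \<omega>) {\<sigma>. \<sigma> x \<in> A}) \<in> borel_measurable (Fsig (past {x}))"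
      using pk Ax unfolding proper_oriented_kernel_def by blast
    have eq: "measure (g \<omega>) {\<sigma>. \<sigma> x \<in> A} = measure (g \<omega>') {\<sigma>. \<sigma> x \<in> A}"
      using Fsig_fun[OF mf ag] .
    have "emeasure (D a) A = ennreal (measure (g a) {\<sigma>. \<sigma> x \<in> A})" for a
    proof -
      interpret prob_space "g a" using pok_prob[OF pk] .
      have "emeasure (D a) A = emeasure (g a) ((\<lambda>\<sigma>. \<sigma> x) -` A \<inter> space (g a))"
        unfolding D_def by (rule emeasure_distr[OF coord_meas[OF pk]]) simp
      also have "\<dots> = emeasure (g a) {\<sigma>. \<sigma> x \<in> A}" by (simp add: pok_space[OF pk] vimage_def)
      finally show ?thesis by (simp add: emeasure_eq_measure)
    qed
    then show "emeasure (D \<omega>) A = emeasure (D \<omega>') A" using eq by simp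
  qed
  have Gc: "G \<omega> = G \<omega>'" if ag: "\<forall>y\<in>V - {x}. \<omega> y = \<omega>' y" for \<omega> \<omega>'
  proof -
    have "D \<omega> = D \<omega>'" using Dc ag pV by (auto simp: past_def)
    moreover have "f ((fun_upd \<omega> x (e))) = f ((fun_upd \<omega>' x e))" for e
      by (rule Fsig_fun[OF f]) (use ag in auto)
    ultimately show ?thesis by (simp add: Ga)
  qed
  define \<pi> where "\<pi> \<omega> = (\<lambda>y. if y \<in> V - {x} then \<omega> y else undefined)" for \<omega> :: "'s \<Rightarrow> 'e"
  have \<pi>m: "\<pi> \<in> measurable (Fsig (V - {x})) (Fsig UNIV)"
    unfolding Fsig_alt[of UNIV]
  proof (rule measurable_measure_of[OF gen_Pow])
    show "\<pi> \<in> space (Fsig (V - {x})) \<rightarrow> UNIV" by simp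
    fix Y :: "('s \<Rightarrow> 'e) set" assume "Y \<in> gen UNIV"
    then obtain y A where Y: "Y = {\<omega>. \<omega> y \<in> A}" by (auto simp: gen_def)
    show "\<pi> -` Y \<inter> space (Fsig (V - {x})) \<in> sets (Fsig (V - {x}))"
    proof (cases "y \<in> V - {x}")
      case True
      then have "\<pi> -` Y \<inter> space (Fsig (V - {x})) = {\<omega>. \<omega> y \<in> A}" by (auto simp: Y \<pi>_def)
      then show ?thesis using Fsig_coord[OF True] by simp
    next
      case False
      then have "\<pi> -` Y \<inter> space (Fsig (V - {x})) = (if undefined \<in> A then space (Fsig (V - {x})) else {})"
        by (auto simp: Y \<pi>_def)
      then show ?thesis by (simp del: space_Fsig)
    qed
  qed
  have "(\<lambda>\<omega>. G (\<pi> \<omega>)) \<in> borel_measurable (Fsig (V - {x}))"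
    using measurable_compose[OF \<pi>m G2] .
  moreover have "G (\<pi> \<omega>) = G \<omega>" for \<omega> by (rule Gc) (simp add: \<pi>_def)
  ultimately show ?thesis unfolding G_def[symmetric] by simp
qed

lemma pok_bound:
  fixes f :: "_ \<Rightarrow> real"
  assumes pk: "proper_oriented_kernel L g" and fm: "f \<in> borel_measurable (Fsig (- fut L))"
    and B: "\<forall>\<omega>. \<bar>f \<omega>\<bar> \<le> B"
  shows "\<bar>\<integral>\<sigma>. f \<sigma> \<partial>(g \<omega>)\<bar> \<le> B"
proof -
  interpret prob_space "g \<omega>" using pok_prob[OF pk] .
  have fg: "f \<in> borel_measurable (g \<omega>)"
    using fm measurable_cong_sets[OF pok_sets[OF pk, symmetric] refl] by blast
  have int: "integrable (g \<omega>) f"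
    by (rule integrable_const_bound[where B=B]) (use B fg in auto)
  have up: "(\<integral>\<sigma>. f \<sigma> \<partial>(g \<omega>)) \<le> B"
    by (rule integral_le_const[OF int]) (use B in \<open>auto simp: abs_le_iff\<close>)
  have Bl: "- B \<le> f \<sigma>" for \<sigma> using B[rule_format, of \<sigma>] by linarith
  moreover have "- B \<le> (\<integral>\<sigma>. f \<sigma> \<partial>(g \<omega>))"
    by (rule integral_ge_const[OF int]) (use Bl in auto)
  ultimately show ?thesis using up by simp
qed

lemma POS_pok: "POS \<gamma> \<Longrightarrow> time_box L \<Longrightarrow> proper_oriented_kernel L (\<gamma> L)"
  unfolding POS_def by simp

lemma POS_cons:
  fixes \<gamma> :: "'s::order set \<Rightarrow> ('s \<Rightarrow> 'e) \<Rightarrow> ('s \<Rightarrow> 'e) measure" and h :: "('s \<Rightarrow> 'e) \<Rightarrow> real"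
  assumes "POS \<gamma>" "time_box L" "time_box D" "L \<subseteq> D"
    "h \<in> borel_measurable (Fsig (- fut L))" "h \<in> borel_measurable (Fsig (- fut D))"
    "\<forall>\<omega>. \<bar>h \<omega>\<bar> \<le> B"
  shows "(\<integral>\<sigma>. (\<integral>\<xi>. h \<xi> \<partial>(\<gamma> L \<sigma>)) \<partial>(\<gamma> D \<omega>)) = (\<integral>\<xi>. h \<xi> \<partial>(\<gamma> D \<omega>))"
proof -
  have "\<forall>L D. time_box L \<and> time_box D \<and> L \<subseteq> D \<longrightarrow>
        (\<forall>h :: ('s \<Rightarrow> 'e) \<Rightarrow> real.
           h \<in> borel_measurable (Fsig (- fut L)) \<and> h \<in> borel_measurable (Fsig (- fut D))
           \<and> (\<exists>B. \<forall>\<omega>. \<bar>h \<omega>\<bar> \<le> B) \<longrightarrow>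
           (\<forall>\<omega>. (\<integral>\<sigma>. (\<integral>\<xi>. h \<xi> \<partial>(\<gamma> L \<sigma>)) \<partial>(\<gamma> D \<omega>)) = (\<integral>\<xi>. h \<xi> \<partial>(\<gamma> D \<omega>))))"
    using assms(1) unfolding POS_def by (rule conjunct2)
  then have "h \<in> borel_measurable (Fsig (- fut L)) \<and> h \<in> borel_measurable (Fsig (- fut D))
           \<and> (\<exists>B. \<forall>\<omega>. \<bar>h \<omega>\<bar> \<le> B) \<longrightarrow>
           (\<forall>\<omega>. (\<integral>\<sigma>. (\<integral>\<xi>. h \<xi> \<partial>(\<gamma> L \<sigma>)) \<partial>(\<gamma> D \<omega>)) = (\<integral>\<xi>. h \<xi> \<partial>(\<gamma> D \<omega>)))"
    using assms(2-4) by blast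
  then show ?thesis using assms(5-7) by blast
qed

lemma kcomp_snoc: "kcomp \<gamma> (xs @ [x]) f = kcomp \<gamma> xs (\<lambda>\<omega>. \<integral>\<sigma>. f \<sigma> \<partial>(\<gamma> {x} \<omega>))"
  by (simp add: kcomp_def)

lemma W_fut: "past L \<inter> fut L = {} \<Longrightarrow> (past L \<union> outer L) \<inter> fut L = {}"
  unfolding outer_def fut_def by auto

lemma chain:
  fixes \<gamma> :: "'s::{order,countable} set \<Rightarrow> ('s \<Rightarrow> 'e::countable) \<Rightarrow> ('s \<Rightarrow> 'e) measure"
    and f :: "_ \<Rightarrow> real"
  assumes P: "POS \<gamma>" and tb: "time_box \<Delta>"
  shows "distinct ys \<Longrightarrow> set ys \<subseteq> \<Delta> \<Longrightarrow> (\<forall>a\<in>set ys. \<forall>y\<in>\<Delta>. y < a \<longrightarrow> y \<in> set ys) \<Longrightarrow>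
     sorted_wrt (\<lambda>a b. \<not> b < a) ys \<Longrightarrow>
     f \<in> borel_measurable (Fsig (past \<Delta> \<union> outer \<Delta> \<union> set ys)) \<Longrightarrow> (\<exists>B. \<forall>\<omega>. \<bar>f \<omega>\<bar> \<le> B) \<Longrightarrow>
     kcomp \<gamma> ys f \<in> borel_measurable (Fsig (past \<Delta> \<union> outer \<Delta>))
     \<and> (\<forall>\<omega>. (\<integral>\<xi>. f \<xi> \<partial>(\<gamma> \<Delta> \<omega>)) = (\<integral>\<xi>. kcomp \<gamma> ys f \<xi> \<partial>(\<gamma> \<Delta> \<omega>)))"
proof (induction ys arbitrary: f rule: rev_induct)
  case Nil
  then show ?case by (simp add: kcomp_def)
next
  case (snoc x xs)
  let ?W = "past \<Delta> \<union> outer \<Delta>"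
  have tbD: "past \<Delta> \<inter> fut \<Delta> = {}" using tb by (simp add: time_box_def)
  have xD: "x \<in> \<Delta>" using snoc.prems by auto
  have xxs: "x \<notin> set xs" using snoc.prems by auto
  have sorted: "\<forall>a\<in>set xs. \<not> x < a" using snoc.prems(4) by (simp add: sorted_wrt_append)
  have pkx: "proper_oriented_kernel {x} (\<gamma> {x})"
    using P singleton_tb by (intro POS_pok) (auto simp: time_box_def)
  define V where "V = ?W \<union> set xs \<union> {x}"
  have fV: "f \<in> borel_measurable (Fsig V)" using snoc.prems(5) by (simp add: V_def)
  have WD: "?W \<inter> \<Delta> = {}" unfolding past_def outer_def by auto
  have pV: "past {x} \<subseteq> V"
  proof
    fix y assume "y \<in> past {x}"
    then have yx: "y < x" by (simp add: past_def)
    show "y \<in> V"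
    proof (cases "y \<in> \<Delta>")
      case True
      then have "y \<in> set (xs @ [x])" using snoc.prems(3) yx by auto
      then show ?thesis using yx by (auto simp: V_def)
    next
      case False
      then have "y \<in> past \<Delta>" using xD yx by (auto simp: past_def)
      then show ?thesis by (simp add: V_def)
    qed
  qed
  have Vf: "V \<subseteq> - fut {x}"
  proof
    fix z assume zV: "z \<in> V"
    show "z \<in> - fut {x}"
    proof
      assume "z \<in> fut {x}"
      then have xz: "x < z" by (simp add: fut_def)
      show False
      proof (cases "z \<in> \<Delta>")
        case True
        then have "z \<in> set xs" using zV WD xz by (auto simp: V_def)
        then show False using sorted xz by blast
      next
        case False
        then have "z \<in> fut \<Delta>" using xD xz by (auto simp: fut_def)
        moreover have "z \<in> ?W" using False zV xD snoc.prems(2) by (auto simp: V_def)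
        ultimately show False using W_fut[OF tbD] by blast
      qed
    qed
  qed
  have VfD: "V \<subseteq> - fut \<Delta>"
    using W_fut[OF tbD] snoc.prems(2) by (auto simp: V_def fut_def)
  define g where "g = (\<lambda>\<omega>. \<integral>\<sigma>. f \<sigma> \<partial>(\<gamma> {x} \<omega>))"
  have gm0: "g \<in> borel_measurable (Fsig (V - {x}))"
    unfolding g_def by (rule point_step[OF pkx fV _ pV Vf]) (simp add: V_def)
  have "V - {x} = ?W \<union> set xs" using xxs WD xD by (auto simp: V_def)
  with gm0 have gm: "g \<in> borel_measurable (Fsig (?W \<union> set xs))" by simp
  obtain B where B: "\<forall>\<omega>. \<bar>f \<omega>\<bar> \<le> B" using snoc.prems(6) by blast
  have gB: "\<exists>B. \<forall>\<omega>. \<bar>g \<omega>\<bar> \<le> B"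
    unfolding g_def using pok_bound[OF pkx Fsig_meas_mono[OF fV Vf] B] by blast
  have dc: "\<forall>a\<in>set xs. \<forall>y\<in>\<Delta>. y < a \<longrightarrow> y \<in> set xs"
  proof (intro ballI impI)
    fix a y assume a: "a \<in> set xs" and "y \<in> \<Delta>" "y < a"
    then have "y \<in> set (xs @ [x])" using snoc.prems(3) by auto
    moreover have "y \<noteq> x" using sorted a \<open>y < a\<close> by blast
    ultimately show "y \<in> set xs" by auto
  qed
  have IH: "kcomp \<gamma> xs g \<in> borel_measurable (Fsig ?W)
     \<and> (\<forall>\<omega>. (\<integral>\<xi>. g \<xi> \<partial>(\<gamma> \<Delta> \<omega>)) = (\<integral>\<xi>. kcomp \<gamma> xs g \<xi> \<partial>(\<gamma> \<Delta> \<omega>)))"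
    using snoc.prems(1,2,4) dc gm gB by (intro snoc.IH) (auto simp: sorted_wrt_append)
  have cons: "(\<integral>\<sigma>. g \<sigma> \<partial>(\<gamma> \<Delta> \<omega>)) = (\<integral>\<xi>. f \<xi> \<partial>(\<gamma> \<Delta> \<omega>))" for \<omega>
  proof -
    have "time_box {x}" using singleton_tb by (simp add: time_box_def)
    moreover have "{x} \<subseteq> \<Delta>" using xD by simp
    ultimately show ?thesis
      unfolding g_def by (rule POS_cons[OF P _ tb _ Fsig_meas_mono[OF fV Vf] Fsig_meas_mono[OF fV VfD] B])
  qed
  show ?case using IH cons by (simp add: kcomp_snoc g_def)
qed

lemma lin_ext:
  fixes A :: "'s::order set"
  assumes "finite A"
  shows "\<exists>xs. distinct xs \<and> set xs = A \<and> sorted_wrt (\<lambda>a b. \<not> b < a) xs"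
  using assms
proof (induction "card A" arbitrary: A)
  case 0
  then show ?case by auto
next
  case (Suc n)
  then have ne: "A \<noteq> {}" by auto
  obtain m where m: "m \<in> A" "\<forall>b\<in>A. m \<le> b \<longrightarrow> m = b" using finite_has_maximal[OF Suc.prems ne] by blast
  obtain xs where xs: "distinct xs" "set xs = A - {m}" "sorted_wrt (\<lambda>a b. \<not> b < a) xs"
  proof -
    have "n = card (A - {m})" using Suc.hyps(2) Suc.prems m(1) by simp
    then show ?thesis using Suc.hyps(1)[of "A - {m}"] Suc.prems that by blast
  qed
  have "\<forall>a\<in>set xs. \<not> m < a" using m xs(2) by auto
  then show ?case using xs m(1)
    by (intro exI[of _ "xs @ [m]"]) (auto simp: sorted_wrt_append)
qed

theorem mainTheorem2:
  fixes \<gamma> :: "'s::{order,countable} set \<Rightarrow> ('s \<Rightarrow> 'e::countable) \<Rightarrow> ('s \<Rightarrow> 'e) measure"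
    and \<Delta> :: "'s set"
  assumes "standing_assms TYPE('s)"
    and "POS \<gamma>"
    and "time_box \<Delta>"
  shows "\<exists>xs. distinct xs \<and> set xs = \<Delta> \<and>
    (\<forall>f :: ('s \<Rightarrow> 'e) \<Rightarrow> real. f \<in> borel_measurable (Fsig (- fut \<Delta>)) \<and> (\<exists>B. \<forall>\<omega>. \<bar>f \<omega>\<bar> \<le> B) \<longrightarrow>
       (\<forall>\<omega>. (\<integral>\<xi>. f \<xi> \<partial>(\<gamma> \<Delta> \<omega>)) = kcomp \<gamma> xs f \<omega>))"
proof -
  have tbD: "past \<Delta> \<inter> fut \<Delta> = {}" and fin: "finite \<Delta>" using assms(3) by (auto simp: time_box_def)
  obtain xs where xs: "distinct xs" "set xs = \<Delta>" "sorted_wrt (\<lambda>a b. \<not> b < a) xs"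
    using lin_ext[OF fin] by blast
  have pkD: "proper_oriented_kernel \<Delta> (\<gamma> \<Delta>)" using assms(2,3) by (rule POS_pok)
  show ?thesis
  proof (intro exI[of _ xs] conjI xs(1,2) allI impI)
    fix f :: "('s \<Rightarrow> 'e) \<Rightarrow> real" and \<omega>
    assume f: "f \<in> borel_measurable (Fsig (- fut \<Delta>)) \<and> (\<exists>B. \<forall>\<omega>. \<bar>f \<omega>\<bar> \<le> B)"
    have eq: "- fut \<Delta> = past \<Delta> \<union> outer \<Delta> \<union> set xs" using compl_fut[OF tbD] xs(2) by auto
    have C: "kcomp \<gamma> xs f \<in> borel_measurable (Fsig (past \<Delta> \<union> outer \<Delta>))
     \<and> (\<forall>\<omega>. (\<integral>\<xi>. f \<xi> \<partial>(\<gamma> \<Delta> \<omega>)) = (\<integral>\<xi>. kcomp \<gamma> xs f \<xi> \<partial>(\<gamma> \<Delta> \<omega>)))"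
      using f xs by (intro chain[OF assms(2,3)]) (auto simp: eq)
    then show "(\<integral>\<xi>. f \<xi> \<partial>(\<gamma> \<Delta> \<omega>)) = kcomp \<gamma> xs f \<omega>"
      using pok_dirac[OF pkD _ tbD] by simp
  qed
qed

end
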